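(* Place the almost positive roots of type $C_n$ in the off-diagonal entries of an $(n+1)\times(n+1)$ array via the bijection: entry $(1,j)$ ($2\le j\le n+1$) is $-\alpha_{j-1}$; entry $(i,j)$ with $2\le i<j$ is $\varepsilon_{i-1}-\varepsilon_{j-1}$; entry $(i,j)$ with $i>j$ is $\varepsilon_j+\varepsilon_{i-1}$. Two almost positive roots $\alpha,\beta$ are $\underline c$-compatible if and only if their locations satisfy one of: (i) they lie in the same row or the same column; (ii) for some $k<m$, $i<j$ with $k,m,i,j$ pairwise distinct, they lie in entries $(k,i)$ and $(m,j)$, and either $k<i<m$ or $i<k<m<j$; (iii) for some $k<m$, $i<j$ with $k,m,i,j$ pairwise distinct, they lie in entries $(m,i)$ and $(k,j)$, and either ($k<i$ and $m<i$) or $i<k<j<m$ or $k>j$.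
   Context: Type $C_n$: standard basis $\varepsilon_i$ of $\mathbb{R}^n$, simple roots $\alpha_i=\varepsilon_i-\varepsilon_{i+1}$ ($i<n$), $\alpha_n=2\varepsilon_n$, $\Pi$ the simple roots, $\Phi_+=\{\varepsilon_i\pm\varepsilon_j:i<j\}\cup\{2\varepsilon_i\}$, $\Phi_{\ge-1}=\Phi_+\sqcup(-\Pi)$. With simple reflections $s_i$ and $c=s_1\cdots s_n$, $\tau:\Phi_{\ge-1}\to\Phi_{\ge-1}$ is $\tau(-\alpha_i)=s_1\cdots s_{i-1}(\alpha_i)$, $\tau(s_n\cdots s_{i+1}(\alpha_i))=-\alpha_i$, $\tau(\alpha)=c(\alpha)$ otherwise. The $\underline c$-compatibility degree $(-\|_{\underline c}-)$ is the unique $\tau$-invariant function $\Phi_{\ge-1}^2\to\mathbb{Z}$ with $(-\alpha\|_{\underline c}-\alpha')=0$ for $\alpha,\alpha'\in\Pi$ and $(-\alpha\|_{\underline c}\beta)=[\beta:\alpha]$ (coefficient of $\alpha$ in $\beta$) for $\alpha\in\Pi,\beta\in\Phi_+$; $\gamma,\gamma'$ are $\underline c$-compatible if $(\gamma\|_{\underline c}\gamma')=0$. *)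

theory Defs
  imports Main "HOL.Real"
begin

text \<open>Vectors of R^n are functions nat => real supported on {1..n};
  eps i is the standard basis vector epsilon_i.\<close>

type_synonym vec = "nat \<Rightarrow> real"

definition eps :: "nat \<Rightarrow> vec" where
  "eps i = (\<lambda>k. if k = i then 1 else 0)"

definition vadd :: "vec \<Rightarrow> vec \<Rightarrow> vec" where
  "vadd v w = (\<lambda>k. v k + w k)"

definition vsub :: "vec \<Rightarrow> vec \<Rightarrow> vec" where
  "vsub v w = (\<lambda>k. v k - w k)"

definition vneg :: "vec \<Rightarrow> vec" where
  "vneg v = (\<lambda>k. - v k)"

definition vscale :: "real \<Rightarrow> vec \<Rightarrow> vec" where
  "vscale c v = (\<lambda>k. c * v k)"

definition inner_n :: "nat \<Rightarrow> vec \<Rightarrow> vec \<Rightarrow> real" where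
  "inner_n n v w = (\<Sum>k=1..n. v k * w k)"

definition alpha :: "nat \<Rightarrow> nat \<Rightarrow> vec" where
  "alpha n i = (if i < n then vsub (eps i) (eps (Suc i)) else vscale 2 (eps n))"

definition simple_roots :: "nat \<Rightarrow> vec set" where
  "simple_roots n = alpha n ` {1..n}"

definition pos_roots :: "nat \<Rightarrow> vec set" where
  "pos_roots n =
     {vsub (eps i) (eps j) | i j. 1 \<le> i \<and> i < j \<and> j \<le> n}
   \<union> {vadd (eps i) (eps j) | i j. 1 \<le> i \<and> i < j \<and> j \<le> n}
   \<union> {vscale 2 (eps i) | i. 1 \<le> i \<and> i \<le> n}"

definition apr :: "nat \<Rightarrow> vec set" where
  "apr n = pos_roots n \<union> vneg ` simple_roots n"

definition srefl :: "nat \<Rightarrow> nat \<Rightarrow> vec \<Rightarrow> vec" where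
  "srefl n i v = vsub v (vscale (2 * inner_n n v (alpha n i) / inner_n n (alpha n i) (alpha n i)) (alpha n i))"

definition sword :: "nat \<Rightarrow> nat list \<Rightarrow> vec \<Rightarrow> vec" where
  "sword n w v = foldr (srefl n) w v"

definition cox :: "nat \<Rightarrow> vec \<Rightarrow> vec" where
  "cox n v = sword n [1..<Suc n] v"

definition tau :: "nat \<Rightarrow> vec \<Rightarrow> vec" where
  "tau n b =
    (if \<exists>i\<in>{1..n}. b = vneg (alpha n i)
     then (let i = (THE i. i \<in> {1..n} \<and> b = vneg (alpha n i)) in sword n [1..<i] (alpha n i))
     else if \<exists>i\<in>{1..n}. b = sword n (rev [Suc i..<Suc n]) (alpha n i)
     then (let i = (THE i. i \<in> {1..n} \<and> b = sword n (rev [Suc i..<Suc n]) (alpha n i)) in vneg (alpha n i))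
     else cox n b)"

definition scoeff :: "nat \<Rightarrow> vec \<Rightarrow> nat \<Rightarrow> real" where
  "scoeff n b i = (THE c. (\<forall>k. k \<notin> {1..n} \<longrightarrow> c k = 0) \<and>
                          b = (\<lambda>t. \<Sum>k=1..n. c k * alpha n k t)) i"

definition is_cdeg :: "nat \<Rightarrow> (vec \<Rightarrow> vec \<Rightarrow> int) \<Rightarrow> bool" where
  "is_cdeg n f \<longleftrightarrow>
     (\<forall>a b. (a \<notin> apr n \<or> b \<notin> apr n) \<longrightarrow> f a b = 0) \<and>
     (\<forall>a\<in>apr n. \<forall>b\<in>apr n. f (tau n a) (tau n b) = f a b) \<and>
     (\<forall>i\<in>{1..n}. \<forall>j\<in>{1..n}. f (vneg (alpha n i)) (vneg (alpha n j)) = 0) \<and>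
     (\<forall>i\<in>{1..n}. \<forall>b\<in>pos_roots n. real_of_int (f (vneg (alpha n i)) b) = scoeff n b i)"

definition cdeg :: "nat \<Rightarrow> vec \<Rightarrow> vec \<Rightarrow> int" where
  "cdeg n = (THE f. is_cdeg n f)"

definition compatible :: "nat \<Rightarrow> vec \<Rightarrow> vec \<Rightarrow> bool" where
  "compatible n a b \<longleftrightarrow> cdeg n a b = 0"

definition loc :: "nat \<Rightarrow> nat \<Rightarrow> nat \<Rightarrow> vec" where
  "loc n i j =
    (if i = 1 then vneg (alpha n (j - 1))
     else if i < j then vsub (eps (i - 1)) (eps (j - 1))
     else vadd (eps j) (eps (i - 1)))"

definition is_entry :: "nat \<Rightarrow> nat \<times> nat \<Rightarrow> bool" where
  "is_entry n p \<longleftrightarrow> 1 \<le> fst p \<and> fst p \<le> Suc n \<and> 1 \<le> snd p \<and> snd p \<le> Suc n \<and> fst p \<noteq> snd p"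

definition same_line :: "nat \<times> nat \<Rightarrow> nat \<times> nat \<Rightarrow> bool" where
  "same_line p q \<longleftrightarrow> fst p = fst q \<or> snd p = snd q"

definition cond_ii :: "nat \<times> nat \<Rightarrow> nat \<times> nat \<Rightarrow> bool" where
  "cond_ii p q \<longleftrightarrow> (\<exists>k m i j. k < m \<and> i < j \<and> distinct [k, m, i, j] \<and>
      ((p = (k, i) \<and> q = (m, j)) \<or> (p = (m, j) \<and> q = (k, i))) \<and>
      ((k < i \<and> i < m) \<or> (i < k \<and> k < m \<and> m < j)))"

definition cond_iii :: "nat \<times> nat \<Rightarrow> nat \<times> nat \<Rightarrow> bool" where
  "cond_iii p q \<longleftrightarrow> (\<exists>k m i j. k < m \<and> i < j \<and> distinct [k, m, i, j] \<and>
      ((p = (m, i) \<and> q = (k, j)) \<or> (p = (k, j) \<and> q = (m, i))) \<and>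
      ((k < i \<and> m < i) \<or> (i < k \<and> k < j \<and> j < m) \<or> k > j))"

end

theory Submission
  imports Defs
begin

lemma inner_eps: "inner_n n v (eps i) = (if 1 \<le> i \<and> i \<le> n then v i else 0)"
  unfolding inner_n_def eps_def by (simp add: if_distrib cong: if_cong)

lemma inner_sub: "inner_n n v (vsub a b) = inner_n n v a - inner_n n v b"
  unfolding inner_n_def vsub_def by (simp add: right_diff_distrib sum_subtractf)

lemma inner_alpha_lt: "1 \<le> i \<Longrightarrow> i < n \<Longrightarrow> inner_n n v (alpha n i) = v i - v (Suc i)"
  unfolding alpha_def by (simp add: inner_sub inner_eps)

lemma inner_alpha_n: "1 \<le> n \<Longrightarrow> inner_n n v (alpha n n) = 2 * v n"
  unfolding alpha_def vscale_def inner_n_def eps_def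
  by (simp add: if_distrib sum_distrib_left[symmetric] cong: if_cong)

lemma srefl_lt: "1 \<le> i \<Longrightarrow> i < n \<Longrightarrow>
  srefl n i v = (\<lambda>k. if k = i then v (Suc i) else if k = Suc i then v i else v k)"
  unfolding srefl_def
  apply (simp add: inner_alpha_lt)
  apply (rule ext)
  apply (simp add: alpha_def vsub_def vscale_def eps_def field_simps)
  done

lemma srefl_n: "1 \<le> n \<Longrightarrow> srefl n n v = (\<lambda>k. if k = n then - v n else v k)"
  unfolding srefl_def
  apply (simp add: inner_alpha_n)
  apply (rule ext)
  apply (simp add: alpha_def vsub_def vscale_def eps_def field_simps)
  done

lemma sword_upt: "1 \<le> a \<Longrightarrow> a \<le> b \<Longrightarrow> b \<le> n \<Longrightarrow>
  sword n [a..<b] v = (\<lambda>k. if k = a then v b else if a < k \<and> k \<le> b then v (k-1) else v k)"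
proof (induction b arbitrary: v)
  case 0 then show ?case by simp
next
  case (Suc b)
  show ?case
  proof (cases "a = Suc b")
    case True then show ?thesis by (auto simp: sword_def)
  next
    case False
    then have ab: "a \<le> b" using Suc by simp
    have "sword n [a..<Suc b] v = sword n [a..<b] (srefl n b v)"
      using ab by (simp add: sword_def)
    also have "\<dots> = (\<lambda>k. if k = a then (srefl n b v) b else if a < k \<and> k \<le> b then (srefl n b v) (k-1) else (srefl n b v) k)"
      using Suc ab by simp
    finally have eq: "sword n [a..<Suc b] v = (\<lambda>k. if k = a then (srefl n b v) b else if a < k \<and> k \<le> b then (srefl n b v) (k-1) else (srefl n b v) k)" .
    show ?thesis unfolding eq by (rule ext) (use Suc ab in \<open>auto simp: srefl_lt\<close>)
  qed
qed

lemma sword_rev: "1 \<le> a \<Longrightarrow> a \<le> b \<Longrightarrow> b \<le> n \<Longrightarrow>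
  sword n (rev [a..<b]) v = (\<lambda>k. if k = b then v a else if a \<le> k \<and> k < b then v (Suc k) else v k)"
proof (induction b arbitrary: v)
  case 0 then show ?case by simp
next
  case (Suc b)
  show ?case
  proof (cases "a = Suc b")
    case True then show ?thesis by (auto simp: sword_def)
  next
    case False
    then have ab: "a \<le> b" using Suc by simp
    have "sword n (rev [a..<Suc b]) v = srefl n b (sword n (rev [a..<b]) v)"
      using ab by (simp add: sword_def)
    also have "\<dots> = srefl n b (\<lambda>k. if k = b then v a else if a \<le> k \<and> k < b then v (Suc k) else v k)"
      using Suc ab by simp
    finally have eq: "sword n (rev [a..<Suc b]) v = srefl n b (\<lambda>k. if k = b then v a else if a \<le> k \<and> k < b then v (Suc k) else v k)" .
    show ?thesis unfolding eq by (rule ext) (use Suc ab in \<open>auto simp: srefl_lt\<close>)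
  qed
qed

lemma cox_eq: "1 \<le> n \<Longrightarrow> cox n v = (\<lambda>k. if k = 1 then - v n else if 1 < k \<and> k \<le> n then v (k-1) else v k)"
proof -
  assume n: "1 \<le> n"
  have "[1..<Suc n] = [1..<n] @ [n]" using n by simp
  then have "cox n v = sword n [1..<n] (srefl n n v)" by (simp add: cox_def sword_def)
  also have "\<dots> = (\<lambda>k. if k = 1 then - v n else if 1 < k \<and> k \<le> n then v (k-1) else v k)"
    using n by (auto simp: sword_upt srefl_n intro!: ext)
  finally show ?thesis .
qed

lemmas vdefs = loc_def alpha_def vneg_def vsub_def vadd_def vscale_def eps_def

definition sg :: "nat \<Rightarrow> nat \<Rightarrow> nat" where
  "sg n x = (if x \<le> n then Suc x else 1)"

definition supp :: "vec \<Rightarrow> nat set" where "supp v = {x. v x \<noteq> 0}"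
definition negs :: "vec \<Rightarrow> nat set" where "negs v = {x. v x < 0}"

lemma V1: "2 \<le> j \<Longrightarrow> j \<le> n \<Longrightarrow> loc n (Suc 0) j = (\<lambda>x. if x = j-1 then -1 else if x = j then 1 else 0)"
  by (auto simp: vdefs intro!: ext)
lemma V1': "1 \<le> n \<Longrightarrow> loc n (Suc 0) (Suc n) = (\<lambda>x. if x = n then -2 else 0)"
  by (auto simp: vdefs intro!: ext)
lemma V2: "2 \<le> i \<Longrightarrow> i < j \<Longrightarrow> loc n i j = (\<lambda>x. if x = i-1 then 1 else if x = j-1 then -1 else 0)"
  by (auto simp: vdefs intro!: ext)
lemma V3: "2 \<le> i \<Longrightarrow> j < i \<Longrightarrow> loc n i j = (\<lambda>x. (if x = j then 1 else 0) + (if x = i-1 then 1 else 0))"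
  by (auto simp: vdefs intro!: ext)

lemma S1: "2 \<le> j \<Longrightarrow> j \<le> n \<Longrightarrow> supp (loc n 1 j) = {j-1, j} \<and> negs (loc n 1 j) = {j-1}"
  by (auto simp: V1 supp_def negs_def)
lemma S1': "1 \<le> n \<Longrightarrow> supp (loc n 1 (Suc n)) = {n} \<and> negs (loc n 1 (Suc n)) = {n}"
  by (auto simp: V1' supp_def negs_def)
lemma S2: "2 \<le> i \<Longrightarrow> i < j \<Longrightarrow> supp (loc n i j) = {i-1, j-1} \<and> negs (loc n i j) = {j-1}"
  by (auto simp: V2 supp_def negs_def)
lemma S3: "2 \<le> i \<Longrightarrow> j < i \<Longrightarrow> 1 \<le> j \<Longrightarrow> supp (loc n i j) = {j, i-1} \<and> negs (loc n i j) = {}"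
  by (auto simp: V3 supp_def negs_def)

lemma loc_cases:
  assumes "is_entry n (i,j)"
  obtains (t1) "i = 1" "2 \<le> j" "j \<le> n" | (t1') "i = 1" "j = Suc n" | (t2) "2 \<le> i" "i < j" "j \<le> Suc n"
    | (t3) "2 \<le> i" "j < i" "1 \<le> j" "i \<le> Suc n"
  using assms unfolding is_entry_def by force

lemma loc_inj:
  assumes "is_entry n (i,j)" "is_entry n (i',j')" "loc n i j = loc n i' j'"
  shows "i = i' \<and> j = j'"
proof -
  have n: "1 \<le> n" using assms(1) unfolding is_entry_def by auto
  have s: "supp (loc n i j) = supp (loc n i' j')" "negs (loc n i j) = negs (loc n i' j')"
    using assms(3) by auto
  show ?thesis
    using assms(1)
  proof (cases rule: loc_cases)
    case t1 from assms(2) show ?thesis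
      by (cases rule: loc_cases) (use t1 s S1 S1' S2 S3 n in \<open>auto simp: doubleton_eq_iff\<close>)
  next
    case t1' from assms(2) show ?thesis
      by (cases rule: loc_cases) (use t1' s S1 S1' S2 S3 n in \<open>auto simp: doubleton_eq_iff\<close>)
  next
    case t2 from assms(2) show ?thesis
      by (cases rule: loc_cases) (use t2 s S1 S1' S2 S3 n in \<open>auto simp: doubleton_eq_iff\<close>)
  next
    case t3 from assms(2) show ?thesis
      by (cases rule: loc_cases) (use t3 s S1 S1' S2 S3 n in \<open>auto simp: doubleton_eq_iff\<close>)
  qed
qed

lemma loc1: "loc n (Suc 0) (Suc i) = vneg (alpha n i)"
  by (simp add: loc_def)

lemma vadd_same: "vadd (eps i) (eps i) = vscale 2 (eps i)"
  by (auto simp: vadd_def vscale_def intro!: ext)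

lemma loc_apr: "is_entry n (i,j) \<Longrightarrow> loc n i j \<in> apr n"
proof -
  assume e: "is_entry n (i,j)"
  then show ?thesis
  proof (cases rule: loc_cases)
    case t1
    then have "loc n i j = vneg (alpha n (j-1))" using loc1[of n "j-1"] by simp
    moreover have "j - 1 \<in> {1..n}" using t1 by auto
    ultimately show ?thesis unfolding apr_def simple_roots_def by blast
  next
    case t1'
    then have "loc n i j = vneg (alpha n n)" using loc1[of n n] by simp
    moreover have "n \<in> {1..n}" using e unfolding is_entry_def by auto
    ultimately show ?thesis unfolding apr_def simple_roots_def by blast
  next
    case t2
    then have "loc n i j = vsub (eps (i-1)) (eps (j-1))" by (simp add: loc_def)
    moreover have "\<exists>i' j'. loc n i j = vsub (eps i') (eps j') \<and> 1 \<le> i' \<and> i' < j' \<and> j' \<le> n"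
      by (rule exI[of _ "i-1"], rule exI[of _ "j-1"]) (use t2 calculation in auto)
    ultimately show ?thesis unfolding apr_def pos_roots_def by blast
  next
    case t3
    then have l: "loc n i j = vadd (eps j) (eps (i-1))" by (simp add: loc_def)
    show ?thesis
    proof (cases "j = i - 1")
      case True
      then have "loc n i j = vscale 2 (eps j)" using l vadd_same by simp
      then show ?thesis using t3 unfolding apr_def pos_roots_def by auto
    next
      case False
      have "\<exists>i' j'. loc n i j = vadd (eps i') (eps j') \<and> 1 \<le> i' \<and> i' < j' \<and> j' \<le> n"
        by (rule exI[of _ "j"], rule exI[of _ "i-1"]) (use t3 l False in auto)
      then show ?thesis unfolding apr_def pos_roots_def by blast
    qed
  qed
qed

lemma pos_loc: "x \<in> pos_roots n \<Longrightarrow> \<exists>i j. is_entry n (i,j) \<and> 2 \<le> i \<and> x = loc n i j"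
  unfolding pos_roots_def
proof (elim UnE CollectE exE conjE)
  fix i j assume h: "x = vsub (eps i) (eps j)" "1 \<le> i" "i < j" "j \<le> n"
  show ?thesis
    by (rule exI[of _ "Suc i"], rule exI[of _ "Suc j"]) (use h in \<open>auto simp: is_entry_def loc_def\<close>)
next
  fix i j assume h: "x = vadd (eps i) (eps j)" "1 \<le> i" "i < j" "j \<le> n"
  show ?thesis
    by (rule exI[of _ "Suc j"], rule exI[of _ "i"]) (use h in \<open>auto simp: is_entry_def loc_def\<close>)
next
  fix i assume h: "x = vscale 2 (eps i)" "1 \<le> i" "i \<le> n"
  show ?thesis
    by (rule exI[of _ "Suc i"], rule exI[of _ "i"]) (use h in \<open>auto simp: is_entry_def loc_def vadd_same\<close>)
qed

lemma neg_loc: "i \<in> {1..n} \<Longrightarrow> vneg (alpha n i) = loc n 1 (Suc i) \<and> is_entry n (1, Suc i)"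
  by (auto simp: loc1 is_entry_def)

lemma apr_loc: "x \<in> apr n \<Longrightarrow> \<exists>i j. is_entry n (i,j) \<and> x = loc n i j"
  unfolding apr_def simple_roots_def
  using pos_loc neg_loc by fastforce

definition Dv :: "nat \<Rightarrow> nat \<Rightarrow> nat \<Rightarrow> nat \<Rightarrow> int" where
  "Dv n J r c = (if r = 1 then 0 else
     if r < c then (if J - 1 < n then of_bool (r - 1 \<le> J - 1) - of_bool (c - 1 \<le> J - 1) else 0)
     else (if J - 1 < n then of_bool (c \<le> J - 1) + of_bool (r - 1 \<le> J - 1) else 1))"

definition sh :: "nat \<Rightarrow> nat \<Rightarrow> nat \<Rightarrow> nat" where
  "sh n a x = (if a \<le> x then x - a + 1 else x + (n + 1) - a + 1)"

definition Gv :: "nat \<Rightarrow> nat \<times> nat \<Rightarrow> nat \<times> nat \<Rightarrow> int" where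
  "Gv n p q = Dv n (sh n (fst p) (snd p)) (sh n (fst p) (fst q)) (sh n (fst p) (snd q))"

lemma cond_ii_alt: "cond_ii (a,b) (r,c) \<longleftrightarrow>
   (a<r \<and> b<c \<and> a\<noteq>b \<and> a\<noteq>c \<and> r\<noteq>b \<and> r\<noteq>c \<and> (a<b \<and> b<r \<or> b<a \<and> a<r \<and> r<c)) \<or>
   (r<a \<and> c<b \<and> a\<noteq>b \<and> a\<noteq>c \<and> r\<noteq>b \<and> r\<noteq>c \<and> (r<c \<and> c<a \<or> c<r \<and> r<a \<and> a<b))"
  unfolding cond_ii_def by auto

lemma cond_iii_alt: "cond_iii (a,b) (r,c) \<longleftrightarrow>
   (r<a \<and> b<c \<and> a\<noteq>b \<and> a\<noteq>c \<and> r\<noteq>b \<and> r\<noteq>c \<and> (r<b \<and> a<b \<or> b<r \<and> r<c \<and> c<a \<or> r>c)) \<or>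
   (a<r \<and> c<b \<and> a\<noteq>b \<and> a\<noteq>c \<and> r\<noteq>b \<and> r\<noteq>c \<and> (a<c \<and> r<c \<or> c<a \<and> a<b \<and> b<r \<or> a>b))"
  unfolding cond_iii_def by auto

lemma Dv_zero:
  assumes "1 \<le> J" "J \<le> Suc n" "1 \<le> r" "r \<le> Suc n" "1 \<le> c" "c \<le> Suc n" "r \<noteq> c"
  shows "Dv n J r c = 0 \<longleftrightarrow> (r = 1 \<or> (r < c \<and> (J < r \<or> c \<le> J)) \<or> (c < r \<and> J \<le> c))"
  using assms unfolding Dv_def by (auto simp: of_bool_def split: if_splits)

lemma sh_range: "1 \<le> a \<Longrightarrow> a \<le> Suc n \<Longrightarrow> 1 \<le> x \<Longrightarrow> x \<le> Suc n \<Longrightarrow> 1 \<le> sh n a x \<and> sh n a x \<le> Suc n"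
  unfolding sh_def by auto

lemma sh_1: "1 \<le> a \<Longrightarrow> a \<le> Suc n \<Longrightarrow> 1 \<le> x \<Longrightarrow> x \<le> Suc n \<Longrightarrow> sh n a x = Suc 0 \<longleftrightarrow> x = a"
  unfolding sh_def by auto
lemma sh_less: "1 \<le> a \<Longrightarrow> a \<le> Suc n \<Longrightarrow> 1 \<le> x \<Longrightarrow> x \<le> Suc n \<Longrightarrow> 1 \<le> y \<Longrightarrow> y \<le> Suc n \<Longrightarrow>
  sh n a x < sh n a y \<longleftrightarrow> (a \<le> x \<and> (y < a \<or> x < y)) \<or> (x < a \<and> y < a \<and> x < y)"
  unfolding sh_def by auto
lemma sh_le: "1 \<le> a \<Longrightarrow> a \<le> Suc n \<Longrightarrow> 1 \<le> x \<Longrightarrow> x \<le> Suc n \<Longrightarrow> 1 \<le> y \<Longrightarrow> y \<le> Suc n \<Longrightarrow>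
  sh n a x \<le> sh n a y \<longleftrightarrow> (a \<le> x \<and> (y < a \<or> x \<le> y)) \<or> (x < a \<and> y < a \<and> x \<le> y)"
  unfolding sh_def by auto

lemma order_part:
  fixes a b r c :: nat
  assumes "a \<noteq> b" "r \<noteq> c"
  shows "((a \<le> r \<and> (c < a \<or> r < c)) \<or> (r < a \<and> c < a \<and> r < c)) \<and> ((a \<le> b \<and> (r < a \<or> b < r)) \<or> (b < a \<and> r < a \<and> b < r) \<or> (a \<le> c \<and> (b < a \<or> c \<le> b)) \<or> (c < a \<and> b < a \<and> c \<le> b))
      \<or> r = a \<or> ((a \<le> c \<and> (r < a \<or> c < r)) \<or> (c < a \<and> r < a \<and> c < r)) \<and> ((a \<le> b \<and> (c < a \<or> b \<le> c)) \<or> (b < a \<and> c < a \<and> b \<le> c))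
   \<longleftrightarrow> (a = r \<or> b = c \<or> cond_ii (a,b) (r,c) \<or> cond_iii (a,b) (r,c))"
  unfolding cond_ii_alt cond_iii_alt using assms
  by (cases rule: linorder_cases[of a r]; cases rule: linorder_cases[of b c]; auto)
lemma final_arith:
  assumes "1 \<le> n" "1 \<le> a" "a \<le> Suc n" "1 \<le> b" "b \<le> Suc n" "1 \<le> r" "r \<le> Suc n" "1 \<le> c" "c \<le> Suc n"
    "a \<noteq> b" "r \<noteq> c"
  shows "Gv n (a,b) (r,c) = 0 \<longleftrightarrow> (a = r \<or> b = c \<or> cond_ii (a,b) (r,c) \<or> cond_iii (a,b) (r,c))"
proof -
  have ne: "sh n a r \<noteq> sh n a c" using assms unfolding sh_def by auto
  have "Gv n (a,b) (r,c) = 0 \<longleftrightarrow> (sh n a r = 1 \<or> (sh n a r < sh n a c \<and> (sh n a b < sh n a r \<or> sh n a c \<le> sh n a b)) \<or> (sh n a c < sh n a r \<and> sh n a b \<le> sh n a c))"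
    unfolding Gv_def fst_conv snd_conv
    by (rule Dv_zero) (use assms sh_range ne in auto)
  also have "\<dots> \<longleftrightarrow> ((a \<le> r \<and> (c < a \<or> r < c)) \<or> (r < a \<and> c < a \<and> r < c)) \<and> ((a \<le> b \<and> (r < a \<or> b < r)) \<or> (b < a \<and> r < a \<and> b < r) \<or> (a \<le> c \<and> (b < a \<or> c \<le> b)) \<or> (c < a \<and> b < a \<and> c \<le> b))
      \<or> r = a \<or> ((a \<le> c \<and> (r < a \<or> c < r)) \<or> (c < a \<and> r < a \<and> c < r)) \<and> ((a \<le> b \<and> (c < a \<or> b \<le> c)) \<or> (b < a \<and> c < a \<and> b \<le> c))"
    using assms by (simp add: sh_1 sh_less sh_le) blast
  also have "\<dots> \<longleftrightarrow> (a = r \<or> b = c \<or> cond_ii (a,b) (r,c) \<or> cond_iii (a,b) (r,c))"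
    by (rule order_part[OF assms(10,11)])
  finally show ?thesis .
qed

lemma spec_loc: "1 \<le> i \<Longrightarrow> i \<le> n \<Longrightarrow> sword n (rev [Suc i..<Suc n]) (alpha n i) = loc n (Suc n) i"
proof -
  assume i: "1 \<le> i" "i \<le> n"
  show ?thesis
  proof (cases "i = n")
    case True
    then show ?thesis using i by (simp add: sword_def loc_def alpha_def vadd_same)
  next
    case False
    then have "rev [Suc i..<Suc n] = n # rev [Suc i..<n]" using i by simp
    then have "sword n (rev [Suc i..<Suc n]) (alpha n i) = srefl n n (sword n (rev [Suc i..<n]) (alpha n i))"
      by (simp add: sword_def)
    also have "\<dots> = loc n (Suc n) i"
      using i False by (auto simp: sword_rev srefl_n V3 alpha_def vsub_def eps_def intro!: ext)
    finally show ?thesis .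
  qed
qed

lemma negimg_loc: "1 \<le> i \<Longrightarrow> i \<le> n \<Longrightarrow> sword n [1..<i] (alpha n i) = loc n 2 (sg n (Suc i))"
  by (auto simp: sword_upt V2 V3 sg_def alpha_def vsub_def vscale_def eps_def intro!: ext)

lemma cox_sub: "1 \<le> n \<Longrightarrow> cox n (vsub x y) = vsub (cox n x) (cox n y)"
  by (auto simp: cox_eq vsub_def intro!: ext)
lemma cox_add: "1 \<le> n \<Longrightarrow> cox n (vadd x y) = vadd (cox n x) (cox n y)"
  by (auto simp: cox_eq vadd_def intro!: ext)
lemma cox_eps: "1 \<le> n \<Longrightarrow> 1 \<le> k \<Longrightarrow> k < n \<Longrightarrow> cox n (eps k) = eps (Suc k)"
  by (auto simp: cox_eq eps_def intro!: ext)
lemma cox_epsn: "1 \<le> n \<Longrightarrow> cox n (eps n) = vneg (eps 1)"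
  by (auto simp: cox_eq eps_def vneg_def intro!: ext)
lemma vsub_vneg: "vsub x (vneg y) = vadd y x"
  by (auto simp: vsub_def vadd_def vneg_def intro!: ext)

lemma tau_loc:
  assumes e: "is_entry n (a,b)"
  shows "tau n (loc n a b) = loc n (sg n a) (sg n b)"
proof -
  have n: "1 \<le> n" using e unfolding is_entry_def by auto
  have negi: "\<And>i. i \<in> {1..n} \<Longrightarrow> vneg (alpha n i) = loc n 1 (Suc i) \<and> is_entry n (1, Suc i)"
    using neg_loc by blast
  have speci: "\<And>i. i \<in> {1..n} \<Longrightarrow> sword n (rev [Suc i..<Suc n]) (alpha n i) = loc n (Suc n) i \<and> is_entry n (Suc n, i)"
    using spec_loc by (auto simp: is_entry_def)
  show ?thesis
  proof (cases "a = 1")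
    case True
    have b: "b - 1 \<in> {1..n}" "b = Suc (b - 1)" using e True unfolding is_entry_def by auto
    have l: "loc n a b = vneg (alpha n (b - 1))" using negi[OF b(1)] b(2) True by simp
    have ex: "\<exists>i\<in>{1..n}. loc n a b = vneg (alpha n i)" using l b by blast
    have th: "(THE i. i \<in> {1..n} \<and> loc n a b = vneg (alpha n i)) = b - 1"
    proof (rule the_equality)
      show "b - 1 \<in> {1..n} \<and> loc n a b = vneg (alpha n (b - 1))" using l b by blast
    next
      fix i assume h: "i \<in> {1..n} \<and> loc n a b = vneg (alpha n i)"
      then have "loc n 1 (Suc i) = loc n 1 (Suc (b-1))" using negi[of i] negi[OF b(1)] l by simp
      then show "i = b - 1" using loc_inj negi[of i] negi[OF b(1)] h by blast
    qed
    have "tau n (loc n a b) = sword n [1..<b-1] (alpha n (b-1))"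
      unfolding tau_def using ex th by (simp add: Let_def)
    also have "\<dots> = loc n 2 (sg n b)" using negimg_loc[of "b-1" n] b by simp
    finally show ?thesis using True n by (simp add: sg_def numeral_2_eq_2)
  next
    case False
    have notneg: "\<not> (\<exists>i\<in>{1..n}. loc n a b = vneg (alpha n i))"
    proof
      assume "\<exists>i\<in>{1..n}. loc n a b = vneg (alpha n i)"
      then obtain i where "i \<in> {1..n}" "loc n a b = loc n 1 (Suc i)" "is_entry n (1, Suc i)" using negi by metis
      then show False using loc_inj[OF e] False by blast
    qed
    show ?thesis
    proof (cases "a = Suc n")
      case True
      have b: "b \<in> {1..n}" using e True unfolding is_entry_def by auto
      have l: "loc n a b = sword n (rev [Suc b..<Suc n]) (alpha n b)" using speci[OF b] True by simp
      have ex: "\<exists>i\<in>{1..n}. loc n a b = sword n (rev [Suc i..<Suc n]) (alpha n i)" using l b by blast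
      have th: "(THE i. i \<in> {1..n} \<and> loc n a b = sword n (rev [Suc i..<Suc n]) (alpha n i)) = b"
      proof (rule the_equality)
        show "b \<in> {1..n} \<and> loc n a b = sword n (rev [Suc b..<Suc n]) (alpha n b)" using l b by blast
      next
        fix i assume h: "i \<in> {1..n} \<and> loc n a b = sword n (rev [Suc i..<Suc n]) (alpha n i)"
        then have "loc n a b = loc n (Suc n) i" "is_entry n (Suc n, i)" using speci[of i] by auto
        then show "i = b" using loc_inj[OF e] by blast
      qed
      have "tau n (loc n a b) = vneg (alpha n b)"
        unfolding tau_def using notneg ex th by (simp add: Let_def)
      also have "\<dots> = loc n 1 (Suc b)" using negi[OF b] by simp
      finally show ?thesis using True b by (simp add: sg_def)
    next
      case False2: False
      have notspec: "\<not> (\<exists>i\<in>{1..n}. loc n a b = sword n (rev [Suc i..<Suc n]) (alpha n i))"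
      proof
        assume "\<exists>i\<in>{1..n}. loc n a b = sword n (rev [Suc i..<Suc n]) (alpha n i)"
        then obtain i where "i \<in> {1..n}" "loc n a b = loc n (Suc n) i" "is_entry n (Suc n, i)" using speci by metis
        then show False using loc_inj[OF e] False2 by blast
      qed
      have "tau n (loc n a b) = cox n (loc n a b)"
        unfolding tau_def using notneg notspec by simp
      also have "\<dots> = loc n (sg n a) (sg n b)"
      proof -
        have r: "2 \<le> a" "a \<le> n" "1 \<le> b" "b \<le> Suc n" "a \<noteq> b"
          using e False False2 unfolding is_entry_def by auto
        have sa: "sg n a = Suc a" using r by (simp add: sg_def)
        consider "a < b" "b \<le> n" | "b = Suc n" | "b < a" using r by linarith
        then show ?thesis
        proof cases
          case 1
          have "loc n a b = vsub (eps (a-1)) (eps (b-1))" using 1 r by (simp add: loc_def)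
          then have "cox n (loc n a b) = vsub (eps a) (eps b)" using 1 r n by (simp add: cox_sub cox_eps)
          then show ?thesis using 1 r by (simp add: loc_def sg_def)
        next
          case 2
          have "loc n a b = vsub (eps (a-1)) (eps n)" using 2 r by (simp add: loc_def)
          then have "cox n (loc n a b) = vadd (eps 1) (eps a)" using 2 r n by (simp add: cox_sub cox_eps cox_epsn vsub_vneg)
          then show ?thesis using 2 r by (simp add: loc_def sg_def)
        next
          case 3
          have "loc n a b = vadd (eps b) (eps (a-1))" using 3 r by (simp add: loc_def)
          then have "cox n (loc n a b) = vadd (eps (Suc b)) (eps a)" using 3 r n by (simp add: cox_add cox_eps)
          then show ?thesis using 3 r by (simp add: loc_def sg_def)
        qed
      qed
      finally show ?thesis .
    qed
  qed
qed

definition cf :: "nat \<Rightarrow> vec \<Rightarrow> nat \<Rightarrow> real" where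
  "cf n b i = (if i < n then (\<Sum>t=1..i. b t) else (\<Sum>t=1..n. b t) / 2)"

lemma alpha_sum_eval:
  assumes n: "1 \<le> n"
  shows "(\<Sum>k=1..n. c k * alpha n k t) =
    (if 1 \<le> t \<and> t \<le> n then (if t < n then c t else 2 * c t) - (if 2 \<le> t then c (t-1) else 0) else 0)"
proof -
  have pw: "\<And>k. k \<in> {1..n} \<Longrightarrow> c k * alpha n k t =
     (if k = t then c k * (if k < n then 1 else 2) else 0) - (if k = t - 1 then (if 2 \<le> t \<and> t \<le> n then c k else 0) else 0)"
    by (auto simp: alpha_def vsub_def vscale_def eps_def)
  have "(\<Sum>k=1..n. c k * alpha n k t) = (\<Sum>k=1..n. (if k = t then c k * (if k < n then 1 else 2) else 0) - (if k = t - 1 then (if 2 \<le> t \<and> t \<le> n then c k else 0) else 0))"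
    by (rule sum.cong) (auto simp: pw)
  also have "\<dots> = (\<Sum>k=1..n. (if k = t then c k * (if k < n then 1 else 2) else 0)) - (\<Sum>k=1..n. (if k = t - 1 then (if 2 \<le> t \<and> t \<le> n then c k else 0) else 0))"
    by (rule sum_subtractf)
  also have "\<dots> = (if 1 \<le> t \<and> t \<le> n then (if t < n then c t else 2 * c t) - (if 2 \<le> t then c (t-1) else 0) else 0)"
    by (simp add: sum.delta' ) (auto)
  finally show ?thesis .
qed

lemma partial_sums:
  assumes n: "1 \<le> n" and b: "\<And>t. b t = (\<Sum>k=1..n. c k * alpha n k t)"
  shows "1 \<le> j \<Longrightarrow> j \<le> n \<Longrightarrow> (\<Sum>t=1..j. b t) = (if j < n then c j else 2 * c j)"
proof (induction j)
  case 0 then show ?case by simp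
next
  case (Suc j)
  show ?case
  proof (cases "j = 0")
    case True then show ?thesis using b alpha_sum_eval[OF n] n Suc.prems by simp
  next
    case False
    then have IH: "(\<Sum>t=1..j. b t) = c j" using Suc by simp
    have "(\<Sum>t=1..Suc j. b t) = (\<Sum>t=1..j. b t) + b (Suc j)" by (simp add: sum.cl_ivl_Suc)
    then show ?thesis using IH b alpha_sum_eval[OF n] Suc False by simp
  qed
qed

lemma cf_unique:
  assumes n: "1 \<le> n" and b: "\<And>t. b t = (\<Sum>k=1..n. c k * alpha n k t)" and i: "i \<in> {1..n}"
  shows "c i = cf n b i"
  using partial_sums[OF n b, of i] partial_sums[OF n b, of n] i n unfolding cf_def by auto

lemma cf_exists:
  assumes n: "1 \<le> n" and supp: "\<And>t. t \<notin> {1..n} \<Longrightarrow> b t = 0"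
  shows "b = (\<lambda>t. \<Sum>k=1..n. (if k \<in> {1..n} then cf n b k else 0) * alpha n k t)"
proof
  fix t
  let ?c = "\<lambda>k. if k \<in> {1..n} then cf n b k else 0"
  have e: "(\<Sum>k=1..n. ?c k * alpha n k t) =
    (if 1 \<le> t \<and> t \<le> n then (if t < n then ?c t else 2 * ?c t) - (if 2 \<le> t then ?c (t-1) else 0) else 0)"
    by (rule alpha_sum_eval[OF n])
  show "b t = (\<Sum>k=1..n. ?c k * alpha n k t)"
  proof (cases "1 \<le> t \<and> t \<le> n")
    case False then show ?thesis using e supp by auto
  next
    case True
    then have st: "(\<Sum>s=1..t. b s) = (\<Sum>s=1..t-1. b s) + b t"
      using sum.cl_ivl_Suc[of b 1 "t-1"] by (cases t) auto
    show ?thesis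
    proof (cases "t = 1")
      case True then show ?thesis using e n by (simp add: cf_def)
    next
      case False
      then show ?thesis using e st True n by (auto simp: cf_def)
    qed
  qed
qed

lemma scoeff_cf:
  assumes n: "1 \<le> n" and supp: "\<And>t. t \<notin> {1..n} \<Longrightarrow> b t = 0" and i: "i \<in> {1..n}"
  shows "scoeff n b i = cf n b i"
proof -
  let ?c = "\<lambda>k. if k \<in> {1..n} then cf n b k else 0"
  have "(THE c. (\<forall>k. k \<notin> {1..n} \<longrightarrow> c k = 0) \<and> b = (\<lambda>t. \<Sum>k=1..n. c k * alpha n k t)) = ?c"
  proof (rule the_equality)
    show "(\<forall>k. k \<notin> {1..n} \<longrightarrow> ?c k = 0) \<and> b = (\<lambda>t. \<Sum>k=1..n. ?c k * alpha n k t)"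
      using cf_exists[OF n supp] by auto
  next
    fix c assume h: "(\<forall>k. k \<notin> {1..n} \<longrightarrow> c k = 0) \<and> b = (\<lambda>t. \<Sum>k=1..n. c k * alpha n k t)"
    show "c = ?c"
    proof
      fix k show "c k = ?c k"
        using h cf_unique[OF n, of b c k] by (cases "k \<in> {1..n}") auto
    qed
  qed
  then show ?thesis unfolding scoeff_def using i by simp
qed

lemma V2': "2 \<le> i \<Longrightarrow> i < j \<Longrightarrow> loc n i j = (\<lambda>x. (if x = i-1 then 1 else 0) - (if x = j-1 then 1 else 0))"
  by (auto simp: vdefs intro!: ext)

lemma loc_pos: "is_entry n (i,j) \<Longrightarrow> 2 \<le> i \<Longrightarrow> loc n i j \<in> pos_roots n"
proof -
  assume e: "is_entry n (i,j)" and i: "2 \<le> i"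
  have "loc n i j \<in> apr n" by (rule loc_apr[OF e])
  moreover have "loc n i j \<notin> vneg ` simple_roots n"
  proof
    assume "loc n i j \<in> vneg ` simple_roots n"
    then obtain k where "k \<in> {1..n}" "loc n i j = vneg (alpha n k)" unfolding simple_roots_def by auto
    then show False using neg_loc[of k n] loc_inj[OF e, of 1 "Suc k"] i by auto
  qed
  ultimately show ?thesis unfolding apr_def by blast
qed

lemma loc_supp: "is_entry n (i,j) \<Longrightarrow> t \<notin> {1..n} \<Longrightarrow> loc n i j t = 0"
  unfolding is_entry_def by (auto simp: vdefs)

lemma Dv_cf:
  assumes e: "is_entry n (r,c)" and r: "2 \<le> r" and i: "1 \<le> i" "i \<le> n"
  shows "real_of_int (Dv n (Suc i) r c) = cf n (loc n r c) i"
proof -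
  have rg: "r \<le> Suc n" "1 \<le> c" "c \<le> Suc n" "r \<noteq> c" using e unfolding is_entry_def by auto
  have sd: "\<And>(x::nat) m. (\<Sum>t=1..m. (if t = x then (1::real) else 0)) = (if 1 \<le> x \<and> x \<le> m then 1 else 0)"
    by (subst sum.delta) auto
  show ?thesis
  proof (cases "r < c")
    case True
    have l: "loc n r c = (\<lambda>x. (if x = r-1 then 1 else 0) - (if x = c-1 then 1 else 0))" using V2' r True by simp
    show ?thesis unfolding l cf_def Dv_def using True r rg i
      by (auto simp: sum_subtractf sd)
  next
    case False
    have l: "loc n r c = (\<lambda>x. (if x = c then 1 else 0) + (if x = r-1 then 1 else 0))" using V3 r False rg by simp
    show ?thesis unfolding l cf_def Dv_def using False r rg i
      by (auto simp: sum.distrib sd)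
  qed
qed

definition locinv :: "nat \<Rightarrow> vec \<Rightarrow> nat \<times> nat" where
  "locinv n x = (THE p. is_entry n p \<and> loc n (fst p) (snd p) = x)"

definition FF :: "nat \<Rightarrow> vec \<Rightarrow> vec \<Rightarrow> int" where
  "FF n x y = (if x \<in> apr n \<and> y \<in> apr n then Gv n (locinv n x) (locinv n y) else 0)"

lemma locinv_loc: "is_entry n (a,b) \<Longrightarrow> locinv n (loc n a b) = (a,b)"
  unfolding locinv_def
proof (rule the_equality)
  assume "is_entry n (a,b)"
  then show "is_entry n (a,b) \<and> loc n (fst (a,b)) (snd (a,b)) = loc n a b" by simp
next
  fix p assume e: "is_entry n (a,b)" and h: "is_entry n p \<and> loc n (fst p) (snd p) = loc n a b"
  then show "p = (a,b)" using loc_inj[of n "fst p" "snd p" a b] by (cases p) auto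
qed

lemma sh_sg: "1 \<le> a \<Longrightarrow> a \<le> Suc n \<Longrightarrow> 1 \<le> x \<Longrightarrow> x \<le> Suc n \<Longrightarrow> sh n (sg n a) (sg n x) = sh n a x"
  unfolding sh_def sg_def by auto

lemma sg_entry: "is_entry n (a,b) \<Longrightarrow> is_entry n (sg n a, sg n b)"
  unfolding is_entry_def sg_def by auto

lemma Gv_sg: "is_entry n (a,b) \<Longrightarrow> is_entry n (r,c) \<Longrightarrow> Gv n (sg n a, sg n b) (sg n r, sg n c) = Gv n (a,b) (r,c)"
  unfolding Gv_def is_entry_def by (simp add: sh_sg)

lemma sh_one: "1 \<le> x \<Longrightarrow> sh n 1 x = x"
  unfolding sh_def by auto

lemma FF_loc: "is_entry n (a,b) \<Longrightarrow> is_entry n (r,c) \<Longrightarrow> FF n (loc n a b) (loc n r c) = Gv n (a,b) (r,c)"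
  unfolding FF_def by (simp add: loc_apr locinv_loc)

lemma is_cdeg_FF:
  assumes n: "1 \<le> n"
  shows "is_cdeg n (FF n)"
  unfolding is_cdeg_def
proof (intro conjI ballI allI impI)
  fix a b assume "a \<notin> apr n \<or> b \<notin> apr n"
  then show "FF n a b = 0" unfolding FF_def by auto
next
  fix x y assume x: "x \<in> apr n" and y: "y \<in> apr n"
  obtain a b where ab: "is_entry n (a,b)" "x = loc n a b" using apr_loc[OF x] by blast
  obtain r c where rc: "is_entry n (r,c)" "y = loc n r c" using apr_loc[OF y] by blast
  show "FF n (tau n x) (tau n y) = FF n x y"
    using ab rc by (simp add: tau_loc FF_loc sg_entry Gv_sg)
next
  fix i j assume i: "i \<in> {1..n}" and j: "j \<in> {1..n}"
  show "FF n (vneg (alpha n i)) (vneg (alpha n j)) = 0"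
    using neg_loc[OF i] neg_loc[OF j] by (simp add: FF_loc Gv_def sh_def Dv_def)
next
  fix i b assume i: "i \<in> {1..n}" and b: "b \<in> pos_roots n"
  obtain r c where rc: "is_entry n (r,c)" "2 \<le> r" "b = loc n r c" using pos_loc[OF b] by blast
  have s1: "sh n 1 (Suc i) = Suc i" "sh n 1 r = r" "sh n 1 c = c" using rc i unfolding is_entry_def by (auto simp: sh_def)
  have "FF n (vneg (alpha n i)) b = Dv n (Suc i) r c"
    using neg_loc[OF i] rc s1 by (simp add: FF_loc Gv_def)
  moreover have "real_of_int (Dv n (Suc i) r c) = cf n b i" using Dv_cf[OF rc(1,2)] i rc(3) by auto
  moreover have "scoeff n b i = cf n b i"
    using scoeff_cf[OF n _ i] loc_supp[OF rc(1)] rc(3) by blast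
  ultimately show "real_of_int (FF n (vneg (alpha n i)) b) = scoeff n b i" by simp
qed

lemma cdeg_unique:
  assumes n: "1 \<le> n" and f: "is_cdeg n f" and g: "is_cdeg n g"
  shows "f = g"
proof -
  have f1: "\<forall>a b. (a \<notin> apr n \<or> b \<notin> apr n) \<longrightarrow> f a b = 0" and
       f2: "\<forall>a\<in>apr n. \<forall>b\<in>apr n. f (tau n a) (tau n b) = f a b" and
       f3: "\<forall>i\<in>{1..n}. \<forall>j\<in>{1..n}. f (vneg (alpha n i)) (vneg (alpha n j)) = 0" and
       f4: "\<forall>i\<in>{1..n}. \<forall>b\<in>pos_roots n. real_of_int (f (vneg (alpha n i)) b) = scoeff n b i"
    using f unfolding is_cdeg_def by auto
  have g1: "\<forall>a b. (a \<notin> apr n \<or> b \<notin> apr n) \<longrightarrow> g a b = 0" and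
       g2: "\<forall>a\<in>apr n. \<forall>b\<in>apr n. g (tau n a) (tau n b) = g a b" and
       g3: "\<forall>i\<in>{1..n}. \<forall>j\<in>{1..n}. g (vneg (alpha n i)) (vneg (alpha n j)) = 0" and
       g4: "\<forall>i\<in>{1..n}. \<forall>b\<in>pos_roots n. real_of_int (g (vneg (alpha n i)) b) = scoeff n b i"
    using g unfolding is_cdeg_def by auto
  have base: "f (loc n 1 b) (loc n r c) = g (loc n 1 b) (loc n r c)"
    if e1: "is_entry n (1,b)" and e2: "is_entry n (r,c)" for b r c
  proof -
    have bi: "b - 1 \<in> {1..n}" "b = Suc (b-1)" using e1 unfolding is_entry_def by auto
    have lb: "loc n 1 b = vneg (alpha n (b-1))" using neg_loc[OF bi(1)] bi(2) by simp
    show ?thesis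
    proof (cases "r = 1")
      case True
      have ci: "c - 1 \<in> {1..n}" "c = Suc (c-1)" using e2 True unfolding is_entry_def by auto
      have lc: "loc n r c = vneg (alpha n (c-1))" using neg_loc[OF ci(1)] ci(2) True by simp
      show ?thesis unfolding lb lc using f3 g3 bi ci by simp
    next
      case False
      then have "loc n r c \<in> pos_roots n" using loc_pos[OF e2] e2 unfolding is_entry_def by auto
      then have "real_of_int (f (loc n 1 b) (loc n r c)) = real_of_int (g (loc n 1 b) (loc n r c))"
        unfolding lb using f4 g4 bi by simp
      then show ?thesis by simp
    qed
  qed
  have step: "\<forall>a b r c. is_entry n (a,b) \<longrightarrow> a + k = Suc n \<longrightarrow> is_entry n (r,c) \<longrightarrow>
      f (loc n a b) (loc n r c) = g (loc n a b) (loc n r c)" for k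
  proof (induction k)
    case 0
    show ?case
    proof (intro allI impI)
      fix a b r c assume e1: "is_entry n (a,b)" and a: "a + 0 = Suc n" and e2: "is_entry n (r,c)"
      have "f (loc n a b) (loc n r c) = f (tau n (loc n a b)) (tau n (loc n r c))"
        using f2 loc_apr[OF e1] loc_apr[OF e2] by simp
      also have "\<dots> = f (loc n 1 (sg n b)) (loc n (sg n r) (sg n c))"
        using tau_loc[OF e1] tau_loc[OF e2] a by (simp add: sg_def)
      also have "\<dots> = g (loc n 1 (sg n b)) (loc n (sg n r) (sg n c))"
        using base sg_entry[OF e1] sg_entry[OF e2] a by (simp add: sg_def)
      also have "\<dots> = g (tau n (loc n a b)) (tau n (loc n r c))"
        using tau_loc[OF e1] tau_loc[OF e2] a by (simp add: sg_def)
      also have "\<dots> = g (loc n a b) (loc n r c)"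
        using g2 loc_apr[OF e1] loc_apr[OF e2] by simp
      finally show "f (loc n a b) (loc n r c) = g (loc n a b) (loc n r c)" .
    qed
  next
    case (Suc k)
    show ?case
    proof (intro allI impI)
      fix a b r c assume e1: "is_entry n (a,b)" and a: "a + Suc k = Suc n" and e2: "is_entry n (r,c)"
      show "f (loc n a b) (loc n r c) = g (loc n a b) (loc n r c)"
      proof (cases "a = 1")
        case True then show ?thesis using base e1 e2 by simp
      next
        case False
        have sa: "sg n a = Suc a" "Suc a + k = Suc n" using a by (auto simp: sg_def)
        have "f (loc n a b) (loc n r c) = f (tau n (loc n a b)) (tau n (loc n r c))"
          using f2 loc_apr[OF e1] loc_apr[OF e2] by simp
        also have "\<dots> = f (loc n (sg n a) (sg n b)) (loc n (sg n r) (sg n c))"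
          using tau_loc[OF e1] tau_loc[OF e2] by simp
        also have "\<dots> = g (loc n (sg n a) (sg n b)) (loc n (sg n r) (sg n c))"
          using Suc.IH sg_entry[OF e1] sg_entry[OF e2] sa by metis
        also have "\<dots> = g (tau n (loc n a b)) (tau n (loc n r c))"
          using tau_loc[OF e1] tau_loc[OF e2] by simp
        also have "\<dots> = g (loc n a b) (loc n r c)"
          using g2 loc_apr[OF e1] loc_apr[OF e2] by simp
        finally show ?thesis .
      qed
    qed
  qed
  show ?thesis
  proof (intro ext)
    fix x y
    show "f x y = g x y"
    proof (cases "x \<in> apr n \<and> y \<in> apr n")
      case False then show ?thesis using f1 g1 by auto
    next
      case True
      obtain a b where ab: "is_entry n (a,b)" "x = loc n a b" using apr_loc True by blast
      obtain r c where rc: "is_entry n (r,c)" "y = loc n r c" using apr_loc True by blast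
      have "a \<le> Suc n" using ab unfolding is_entry_def by auto
      then have "a + (Suc n - a) = Suc n" by simp
      then show ?thesis using step[of "Suc n - a"] ab rc by blast
    qed
  qed
qed

lemma cdeg_eq: "1 \<le> n \<Longrightarrow> cdeg n = FF n"
  unfolding cdeg_def using is_cdeg_FF cdeg_unique by blast

theorem theorem4p6:
  fixes n :: nat and p q :: "nat \<times> nat"
  assumes "1 \<le> n"
    and "is_entry n p" and "is_entry n q"
  shows "compatible n (loc n (fst p) (snd p)) (loc n (fst q) (snd q)) \<longleftrightarrow>
           (same_line p q \<or> cond_ii p q \<or> cond_iii p q)"
proof -
  obtain a b where p: "p = (a,b)" by (cases p)
  obtain r c where q: "q = (r,c)" by (cases q)
  have e1: "is_entry n (a,b)" and e2: "is_entry n (r,c)" using assms p q by auto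
  have "compatible n (loc n a b) (loc n r c) \<longleftrightarrow> Gv n (a,b) (r,c) = 0"
    unfolding compatible_def cdeg_eq[OF assms(1)] FF_loc[OF e1 e2] ..
  also have "\<dots> \<longleftrightarrow> (a = r \<or> b = c \<or> cond_ii (a,b) (r,c) \<or> cond_iii (a,b) (r,c))"
    by (rule final_arith) (use assms(1) e1 e2 in \<open>auto simp: is_entry_def\<close>)
  finally show ?thesis unfolding p q same_line_def by simp
qed

end
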